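(* Let $n\ge 1$ and $m\ge 2$ be integers with $m\nmid n$, let $\ell=\lfloor n/m\rfloor$, and let $k\ge 1$. Then the $k$-fold composition $\chi_{n,m}^k$ satisfies $$\chi_{n,m}^k=\sum_{j=0}^{\min\{k,\ell\}}a_j\theta_{m,j},$$ where $a_j\in\mathbb{F}_2$ and $a_j=1$ if and only if $j\preceq k$.
   Context: Indices of coordinates of $x\in\mathbb{F}_2^n$ are taken modulo $n$. $\chi_{n,m}\colon\mathbb{F}_2^n\to\mathbb{F}_2^n$ is given by $\chi_{n,m}(x)=y$ with $y_i=x_i+x_{i+m}(x_{i+m-1}+1)\cdots(x_{i+1}+1)$. For a nonnegative integer $k$, $\theta_{m,k}(x)=y$ with $y_i=x_{i+mk}\prod_{1\le j\le mk-1,\ m\nmid j}(x_{i+j}+1)$; $\theta_{m,0}$ is the identity map. Sums of maps are pointwise sums. For nonnegative integers $j,k$ with binary expansions $j=\sum_i j_i2^i$, $k=\sum_i k_i2^i$ ($j_i,k_i\in\{0,1\}$), $j\preceq k$ means $j_i\le k_i$ for all $i$. *)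

theory Defs
  imports Main "HOL-Library.Z2"
begin

text \<open>Elements of F_2^n are modelled as functions nat => bit (bit = F_2 from HOL-Library.Z2);
  only the coordinates (i mod n) are ever read, so indices are taken modulo n.\<close>

definition chi :: "nat \<Rightarrow> nat \<Rightarrow> (nat \<Rightarrow> bit) \<Rightarrow> (nat \<Rightarrow> bit)" where
  "chi n m x = (\<lambda>i. x (i mod n) + x ((i + m) mod n) * (\<Prod>j\<in>{1..m-1}. x ((i + j) mod n) + 1))"

definition theta :: "nat \<Rightarrow> nat \<Rightarrow> nat \<Rightarrow> (nat \<Rightarrow> bit) \<Rightarrow> (nat \<Rightarrow> bit)" where
  "theta n m k x = (if k = 0 then x else
     (\<lambda>i. x ((i + m * k) mod n) *
          (\<Prod>j\<in>{j. 1 \<le> j \<and> j \<le> m * k - 1 \<and> \<not> m dvd j}. x ((i + j) mod n) + 1)))"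

definition bin_le :: "nat \<Rightarrow> nat \<Rightarrow> bool" where
  "bin_le j k = (\<forall>i. (j div 2 ^ i) mod 2 \<le> (k div 2 ^ i) mod 2)"

end

theory Submission
  imports Defs
begin
declare add_bit_eq_xor[simp del] mult_bit_eq_and[simp del]

lemma bit_cases2: "(b::bit) = 0 \<or> b = 1" by (cases b) auto
lemma bit_1p1: "(1::bit) + 1 = 0" by (metis bit_2_eq_0 one_add_one)
lemma bit_mul_self_p1: "(b::bit) * (b + 1) = 0"
  by (cases b) (auto simp: bit_1p1)

definition Zf :: "nat \<Rightarrow> nat \<Rightarrow> (nat \<Rightarrow> bit) \<Rightarrow> nat \<Rightarrow> bit" where
  "Zf n m x i = (\<Prod>t\<in>{1..m-1}. x ((i+t) mod n) + 1)"

lemma chi_eq: "chi n m x i = x (i mod n) + x ((i+m) mod n) * Zf n m x i"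
  by (simp add: chi_def Zf_def)

lemma Zf_mod: "Zf n m x (i mod n) = Zf n m x i"
  unfolding Zf_def by (simp add: mod_add_left_eq)

lemma S_one: fixes m :: nat assumes "m \<ge> 1" shows "{j. 1 \<le> j \<and> j \<le> m * 1 - 1 \<and> \<not> m dvd j} = {1..m-1}"
proof -
  have "\<And>x. 1 \<le> x \<Longrightarrow> x \<le> m - 1 \<Longrightarrow> \<not> m dvd x"
    proof
    fix x assume "1 \<le> x" "x \<le> m - 1" "m dvd x"
    then have "m \<le> x" by (intro dvd_imp_le) auto
    then show False using \<open>x \<le> m - 1\<close> assms by linarith
  qed
  then show ?thesis unfolding mult_1_right by auto
qed

lemma S_Suc: fixes m j :: nat assumes "m \<ge> 1" "j \<ge> 1"
  shows "{t. 1 \<le> t \<and> t \<le> m * Suc j - 1 \<and> \<not> m dvd t}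
     = {1..m-1} \<union> (\<lambda>s. s + m) ` {t. 1 \<le> t \<and> t \<le> m * j - 1 \<and> \<not> m dvd t}"
proof (rule set_eqI, rule iffI)
  fix t assume t: "t \<in> {t. 1 \<le> t \<and> t \<le> m * Suc j - 1 \<and> \<not> m dvd t}"
  show "t \<in> {1..m-1} \<union> (\<lambda>s. s + m) ` {t. 1 \<le> t \<and> t \<le> m * j - 1 \<and> \<not> m dvd t}"
  proof (cases "t < m")
    case True then show ?thesis using t by auto
  next
    case False
    then have "t \<noteq> m" using t by auto
    with False have "t - m \<ge> 1" by auto
    moreover have "\<not> m dvd (t - m)" using t False
      by (metis dvd_diff_nat dvd_refl add_diff_inverse_nat dvd_add mem_Collect_eq)
    moreover have "t - m \<le> m * j - 1" using t by (auto simp: algebra_simps)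
    ultimately have "t - m \<in> {t. 1 \<le> t \<and> t \<le> m * j - 1 \<and> \<not> m dvd t}" by auto
    moreover have "t = (t - m) + m" using False by auto
    ultimately show ?thesis by blast
  qed
next
  fix t assume "t \<in> {1..m-1} \<union> (\<lambda>s. s + m) ` {t. 1 \<le> t \<and> t \<le> m * j - 1 \<and> \<not> m dvd t}"
  then show "t \<in> {t. 1 \<le> t \<and> t \<le> m * Suc j - 1 \<and> \<not> m dvd t}"
  proof
    assume "t \<in> {1..m-1}" then show ?thesis using assms
      by (auto dest: dvd_imp_le)
  next
    assume "t \<in> (\<lambda>s. s + m) ` {t. 1 \<le> t \<and> t \<le> m * j - 1 \<and> \<not> m dvd t}"
    then obtain s where s: "t = s + m" "1 \<le> s" "s \<le> m * j - 1" "\<not> m dvd s" by auto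
    then show ?thesis using assms by (auto simp: algebra_simps)
  qed
qed

lemma finite_S: "finite {t::nat. 1 \<le> t \<and> t \<le> M \<and> P t}"
  by (rule finite_subset[of _ "{..M}"]) auto

lemma theta_Suc: fixes m :: nat assumes "m \<ge> 1"
  shows "theta n m (Suc j) x i = Zf n m x i * theta n m j x ((i+m) mod n)"
proof (cases "j = 0")
  case True
  then show ?thesis unfolding theta_def Zf_def using S_one[OF assms]
    by (simp add: mult.commute)
next
  case False
  let ?f = "\<lambda>t. x ((i+t) mod n) + 1"
  let ?S = "{t. 1 \<le> t \<and> t \<le> m * j - 1 \<and> \<not> m dvd t}"
  have disj: "{1..m-1} \<inter> (\<lambda>s. s + m) ` ?S = {}" by auto
  have inj: "inj_on (\<lambda>s. s + m) ?S" by (auto simp: inj_on_def)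
  have "prod ?f ({1..m-1} \<union> (\<lambda>s. s + m) ` ?S) = prod ?f {1..m-1} * prod ?f ((\<lambda>s. s + m) ` ?S)"
    by (rule prod.union_disjoint) (auto simp: finite_S)
  also have "prod ?f ((\<lambda>s. s + m) ` ?S) = prod (\<lambda>t. x (((i+m) mod n + t) mod n) + 1) ?S"
    by (subst prod.reindex[OF inj]) (auto intro!: prod.cong simp: mod_add_left_eq mod_add_right_eq ac_simps)
  finally have P: "prod ?f ({1..m-1} \<union> (\<lambda>s. s + m) ` ?S) = Zf n m x i * prod (\<lambda>t. x (((i+m) mod n + t) mod n) + 1) ?S"
    unfolding Zf_def .
  have X: "x ((i + m * Suc j) mod n) = x (((i+m) mod n + m * j) mod n)"
    by (metis mod_add_left_eq add.assoc mult_Suc_right)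
  have L: "theta n m (Suc j) x i = x ((i + m * Suc j) mod n) * prod ?f {t. 1 \<le> t \<and> t \<le> m * Suc j - 1 \<and> \<not> m dvd t}"
    unfolding theta_def if_not_P[OF Suc_not_Zero] by (rule refl)
  have R: "theta n m j x ((i+m) mod n) = x (((i+m) mod n + m * j) mod n) * prod (\<lambda>t. x (((i+m) mod n + t) mod n) + 1) ?S"
    unfolding theta_def if_not_P[OF False] by (rule refl)
  have j1: "j \<ge> 1" using False by simp
  show ?thesis unfolding L R S_Suc[OF assms j1] P X by (simp only: ac_simps)
qed

lemma theta_ell1:
  fixes n m :: nat
  assumes "n \<ge> 1" "m \<ge> 2" "\<not> m dvd n"
  shows "theta n m (Suc (n div m)) x i = 0"
proof -
  let ?l = "n div m"
  let ?f = "\<lambda>t. x ((i+t) mod n) + 1"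
  let ?S = "{t. 1 \<le> t \<and> t \<le> m * Suc ?l - 1 \<and> \<not> m dvd t}"
  have nm: "n = m * ?l + n mod m" by simp
  have r0: "n mod m > 0" using assms(3) by (simp add: mod_eq_0_iff_dvd[symmetric] gr0I)
  have r1: "n mod m < m" using assms(2) by simp
  define r where "r = m - n mod m"
  have rr: "m * Suc ?l = n + r"
  proof -
    have "m * Suc ?l = m + m * ?l" by simp
    then show ?thesis unfolding r_def using r1 nm by linarith
  qed
  have r_ge: "1 \<le> r" "r < m" unfolding r_def using r0 r1 by auto
  have ndvd: "\<not> m dvd r" using r_ge by (auto dest: dvd_imp_le)
  have rS: "r \<in> ?S" using r_ge ndvd rr by auto
  have fin: "finite ?S" by (rule finite_S)
  have idx: "(i + m * Suc ?l) mod n = (i + r) mod n" unfolding rr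
    by (metis add.assoc add.commute mod_add_self2)
  have "theta n m (Suc ?l) x i = x ((i + m * Suc ?l) mod n) * prod ?f ?S"
    unfolding theta_def if_not_P[OF Suc_not_Zero] by (rule refl)
  also have "prod ?f ?S = ?f r * prod ?f (?S - {r})"
    by (rule prod.remove[OF fin rS])
  finally show ?thesis unfolding idx
    by (metis bit_mul_self_p1 mult.assoc mult_zero_left)
qed

lemma theta_big:
  fixes n m :: nat
  assumes "n \<ge> 1" "m \<ge> 2" "\<not> m dvd n" "j > n div m"
  shows "theta n m j x i = 0"
  using assms(4)
proof (induction j arbitrary: i)
  case 0 then show ?case by simp
next
  case (Suc j)
  show ?case
  proof (cases "j = n div m")
    case True then show ?thesis using theta_ell1[OF assms(1-3)] by simp
  next
    case False
    then have "j > n div m" using Suc.prems by simp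
    then show ?thesis using Suc.IH theta_Suc[of m n j x i] assms(2) by simp
  qed
qed

lemma theta_one_zeros:
  fixes m j :: nat
  assumes "m \<ge> 1" "j \<ge> 1" "theta n m j x i = 1" "u \<in> {1..m-1}"
  shows "x ((i+u) mod n) = 0"
proof (rule ccontr)
  assume "x ((i+u) mod n) \<noteq> 0"
  then have xu: "x ((i+u) mod n) + 1 = 0" by (simp add: bit_1p1)
  let ?S = "{t. 1 \<le> t \<and> t \<le> m * j - 1 \<and> \<not> m dvd t}"
  have "m - 1 \<le> m * j - 1" using assms(2) by (simp add: diff_le_mono)
  moreover have "\<not> m dvd u" using assms(4) by (auto dest: dvd_imp_le)
  ultimately have uS: "u \<in> ?S" using assms(4) by auto
  have "prod (\<lambda>t. x ((i+t) mod n) + 1) ?S = 0"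
    by (rule prod_zero[OF finite_S]) (use uS xu in blast)
  moreover have "theta n m j x i = x ((i + m * j) mod n) * prod (\<lambda>t. x ((i+t) mod n) + 1) ?S"
    using assms(2) unfolding theta_def by simp
  ultimately have "theta n m j x i = 0" by (simp only: mult_zero_right)
  with assms(3) show False by simp
qed

lemma chi_offsets:
  fixes m :: nat
  assumes cond: "x ((i+m) mod n) = 1 \<or> (\<forall>u\<in>{1..m-1}. x ((i+m+u) mod n) = 0)"
    and t: "t \<in> {1..m-1}"
  shows "chi n m x ((i+t) mod n) = x ((i+t) mod n)"
proof -
  have "x ((i+t+m) mod n) * Zf n m x (i+t) = 0"
  proof (cases "x ((i+m) mod n) = 1")
    case True
    have "m - t \<in> {1..m-1}" using t by auto
    moreover have "x ((i + t + (m - t)) mod n) + 1 = 0" proof -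
      have "i + t + (m - t) = i + m" using t by auto
      then show ?thesis using True by (simp add: bit_1p1)
    qed
    ultimately have "Zf n m x (i+t) = 0" unfolding Zf_def
      by (intro prod_zero) auto
    then show ?thesis by simp
  next
    case False
    then have "x ((i+m+t) mod n) = 0" using cond t by auto
    then show ?thesis by (simp add: ac_simps)
  qed
  then show ?thesis unfolding chi_eq Zf_mod by (simp add: mod_add_left_eq)
qed

lemma Zf_chi:
  fixes m :: nat
  assumes cond: "x ((i+m) mod n) = 1 \<or> (\<forall>u\<in>{1..m-1}. x ((i+m+u) mod n) = 0)"
  shows "Zf n m (chi n m x) i = Zf n m x i"
  unfolding Zf_def by (rule prod.cong[OF refl]) (simp add: chi_offsets[OF cond])

lemma theta0[simp]: "theta n m 0 x = x" by (simp add: theta_def)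

lemma bit_sum_one: "(a::bit) + b = 1 \<Longrightarrow> a = 1 \<or> b = 1"
  by (cases a; cases b) (auto simp: bit_1p1)

lemma cond_from_W:
  fixes n m j :: nat
  assumes "m \<ge> 1" "theta n m j x ((i+m) mod n) + theta n m (Suc j) x ((i+m) mod n) = 1"
  shows "x ((i+m) mod n) = 1 \<or> (\<forall>u\<in>{1..m-1}. x ((i+m+u) mod n) = 0)"
proof -
  let ?i = "(i+m) mod n"
  have Z: "x ((i+m+u) mod n) = 0" if "theta n m k x ?i = 1" "k \<ge> 1" "u \<in> {1..m-1}" for k u
    using theta_one_zeros[OF assms(1) that(2) that(1) that(3)] by (simp add: mod_add_left_eq)
  from bit_sum_one[OF assms(2)] show ?thesis
  proof
    assume h: "theta n m j x ?i = 1"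
    show ?thesis
    proof (cases "j = 0")
      case True then show ?thesis using h by simp
    next
      case False then show ?thesis using h Z[of j] by simp
    qed
  next
    assume h: "theta n m (Suc j) x ?i = 1"
    then show ?thesis using Z[of "Suc j"] by simp
  qed
qed

lemma theta_chi:
  fixes n m :: nat
  assumes "n \<ge> 1" "m \<ge> 2"
  shows "\<forall>i<n. theta n m j (chi n m x) i = theta n m j x i + theta n m (Suc j) x i"
proof (induction j)
  case 0
  show ?case
  proof (intro allI impI)
    fix i assume "i < n"
    then show "theta n m 0 (chi n m x) i = theta n m 0 x i + theta n m (Suc 0) x i"
      using theta_Suc[of m n 0 x i] assms by (simp add: chi_eq mult.commute)
  qed
next
  case (Suc j)
  show ?case
  proof (intro allI impI)
    fix i assume "i < n"
    let ?i = "(i+m) mod n"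
    have i': "?i < n" using assms(1) by simp
    let ?W = "theta n m j x ?i + theta n m (Suc j) x ?i"
    have m1: "m \<ge> 1" using assms(2) by simp
    have key: "Zf n m (chi n m x) i * ?W = Zf n m x i * ?W"
    proof (cases "?W = 0")
      case True then show ?thesis by simp
    next
      case False
      then have "?W = 1" by simp
      from Zf_chi[OF cond_from_W[OF m1 this]] show ?thesis by simp
    qed
    have "theta n m (Suc j) (chi n m x) i = Zf n m (chi n m x) i * theta n m j (chi n m x) ?i"
      by (rule theta_Suc[OF m1])
    also have "\<dots> = Zf n m (chi n m x) i * ?W" using Suc.IH i' by simp
    also have "\<dots> = Zf n m x i * ?W" by (rule key)
    also have "\<dots> = theta n m (Suc j) x i + theta n m (Suc (Suc j)) x i"
      by (simp add: theta_Suc[OF m1] distrib_left)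
    finally show "theta n m (Suc j) (chi n m x) i = theta n m (Suc j) x i + theta n m (Suc (Suc j)) x i" .
  qed
qed

lemma bin_le_rec: "bin_le j k \<longleftrightarrow> (j mod 2 \<le> k mod 2 \<and> bin_le (j div 2) (k div 2))"
proof -
  have D: "a div 2 ^ Suc i = (a div 2) div 2 ^ i" for a i :: nat
    by (simp add: div_mult2_eq)
  show ?thesis unfolding bin_le_def
  proof (intro iffI conjI allI)
    assume h: "\<forall>i. j div 2 ^ i mod 2 \<le> k div 2 ^ i mod 2"
    show "j mod 2 \<le> k mod 2" using h[rule_format, of 0] by simp
    fix i show "j div 2 div 2 ^ i mod 2 \<le> k div 2 div 2 ^ i mod 2"
      using h[rule_format, of "Suc i"] by (simp only: D)
  next
    fix i assume h: "j mod 2 \<le> k mod 2 \<and> (\<forall>i. j div 2 div 2 ^ i mod 2 \<le> k div 2 div 2 ^ i mod 2)"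
    show "j div 2 ^ i mod 2 \<le> k div 2 ^ i mod 2"
    proof (cases i)
      case 0 then show ?thesis using h by simp
    next
      case (Suc i') then show ?thesis using h by (simp only: D)
    qed
  qed
qed

lemma bin_le_ee: "bin_le (2*b) (2*a) \<longleftrightarrow> bin_le b a" by (subst bin_le_rec) simp
lemma bin_le_oe: "\<not> bin_le (2*b+1) (2*a)" by (subst bin_le_rec) simp
lemma bin_le_eo: "bin_le (2*b) (2*a+1) \<longleftrightarrow> bin_le b a" by (subst bin_le_rec) simp
lemma bin_le_oo: "bin_le (2*b+1) (2*a+1) \<longleftrightarrow> bin_le b a" by (subst bin_le_rec) simp

lemma bin_le_0: "bin_le 0 k" by (simp add: bin_le_def)

lemma bin_le_le: "bin_le j k \<Longrightarrow> j \<le> k"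
proof (induction j arbitrary: k rule: less_induct)
  case (less j)
  show ?case
  proof (cases "j = 0")
    case True then show ?thesis by simp
  next
    case False
    have "j div 2 < j" using False by simp
    moreover have r: "j mod 2 \<le> k mod 2" "bin_le (j div 2) (k div 2)" using bin_le_rec[THEN iffD1, OF less.prems] by auto
    ultimately have "j div 2 \<le> k div 2" using less.IH by blast
    with r(1) show ?thesis using div_mult_mod_eq[of j 2] div_mult_mod_eq[of k 2] by linarith
  qed
qed

lemma pascal: "j \<ge> 1 \<Longrightarrow> bin_le j (Suc k) \<longleftrightarrow> (bin_le j k \<noteq> bin_le (j-1) k)"
proof (induction k arbitrary: j rule: less_induct)
  case (less k)
  obtain a where ka: "k = 2*a \<or> k = 2*a+1" by (metis oddE evenE)
  obtain b where jb: "j = 2*b \<or> j = 2*b+1" by (metis oddE evenE)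
  from ka show ?case
  proof
    assume k: "k = 2*a"
    have sk: "Suc k = 2*a+1" using k by simp
    from jb show ?thesis
    proof
      assume j: "j = 2*b"
      then have b1: "b \<ge> 1" using less.prems by simp
      have "j - 1 = 2*(b-1)+1" using j b1 by simp
      then show ?thesis unfolding sk unfolding j k using bin_le_eo[of b a] bin_le_ee[of b a] bin_le_oe[of "b-1" a]
        by (simp del: One_nat_def)
    next
      assume j: "j = 2*b+1"
      then show ?thesis unfolding sk unfolding j k using bin_le_oo[of b a] bin_le_oe[of b a] bin_le_ee[of b a]
        by simp
    qed
  next
    assume k: "k = 2*a+1"
    have sk: "Suc k = 2*(Suc a)" using k by simp
    from jb show ?thesis
    proof
      assume j: "j = 2*b"
      then have b1: "b \<ge> 1" using less.prems by simp
      have jm: "j - 1 = 2*(b-1)+1" using j b1 by simp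
      have IH: "bin_le b (Suc a) \<longleftrightarrow> (bin_le b a \<noteq> bin_le (b-1) a)"
        using less.IH[of a b] k b1 by simp
      show ?thesis unfolding sk jm unfolding j k using bin_le_ee[of b "Suc a"] bin_le_eo[of b a] bin_le_oo[of "b-1" a] IH
        by (simp del: One_nat_def)
    next
      assume j: "j = 2*b+1"
      show ?thesis unfolding sk j k using bin_le_oe[of b "Suc a"] bin_le_oo[of b a] bin_le_eo[of b a]
        by simp
    qed
  qed
qed

definition cb :: "nat \<Rightarrow> nat \<Rightarrow> bit" where "cb k j = (if bin_le j k then 1 else 0)"

lemma cb_pascal: "cb (Suc k) j = cb k j + (if j = 0 then 0 else cb k (j-1))"
proof (cases "j = 0")
  case True then show ?thesis by (simp add: cb_def bin_le_0)
next
  case False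
  then have "bin_le j (Suc k) \<longleftrightarrow> (bin_le j k \<noteq> bin_le (j-1) k)" using pascal by simp
  then show ?thesis using False by (auto simp: cb_def bit_1p1)
qed

lemma cb_0: "cb 0 j = (if j = 0 then 1 else 0)"
  using bin_le_le[of j 0] by (auto simp: cb_def bin_le_0)

lemma chi_pow:
  fixes n m :: nat
  assumes "n \<ge> 1" "m \<ge> 2" "\<not> m dvd n"
  shows "\<forall>x. \<forall>i<n. (chi n m ^^ k) x i = (\<Sum>j\<le>n div m. cb k j * theta n m j x i)"
proof (induction k)
  case 0
  have "(\<Sum>j\<le>n div m. cb 0 j * theta n m j x i) = (\<Sum>j\<le>n div m. if j = 0 then theta n m j x i else 0)" for x i
    by (rule sum.cong) (auto simp: cb_0)
  then show ?case by simp
next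
  case (Suc k)
  let ?L = "n div m"
  show ?case
  proof (intro allI impI)
    fix x i assume i: "i < n"
    let ?g = "\<lambda>j. (if j = 0 then 0 else cb k (j-1)) * theta n m j x i"
    have "(chi n m ^^ Suc k) x i = (chi n m ^^ k) (chi n m x) i"
      by (simp only: funpow_Suc_right comp_apply)
    also have "\<dots> = (\<Sum>j\<le>?L. cb k j * theta n m j (chi n m x) i)" using Suc.IH i by blast
    also have "\<dots> = (\<Sum>j\<le>?L. cb k j * theta n m j x i) + (\<Sum>j\<le>?L. cb k j * theta n m (Suc j) x i)"
      using theta_chi[OF assms(1,2)] i by (simp add: distrib_left sum.distrib)
    also have "(\<Sum>j\<le>?L. cb k j * theta n m (Suc j) x i) = (\<Sum>j\<le>?L. ?g j)"
    proof -
      have "(\<Sum>j\<le>Suc ?L. ?g j) = ?g 0 + (\<Sum>j\<le>?L. ?g (Suc j))" by (rule sum.atMost_Suc_shift)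
      also have "\<dots> = (\<Sum>j\<le>?L. cb k j * theta n m (Suc j) x i)" by simp
      finally have A: "(\<Sum>j\<le>Suc ?L. ?g j) = (\<Sum>j\<le>?L. cb k j * theta n m (Suc j) x i)" .
      have "(\<Sum>j\<le>Suc ?L. ?g j) = (\<Sum>j\<le>?L. ?g j) + ?g (Suc ?L)" by (rule sum.atMost_Suc)
      also have "?g (Suc ?L) = 0" using theta_big[OF assms, of "Suc ?L" x i] by simp
      finally have B: "(\<Sum>j\<le>Suc ?L. ?g j) = (\<Sum>j\<le>?L. ?g j)" by (simp only: add_0_right)
      show ?thesis by (rule trans[OF A[symmetric] B])
    qed
    also have "(\<Sum>j\<le>?L. cb k j * theta n m j x i) + (\<Sum>j\<le>?L. ?g j) = (\<Sum>j\<le>?L. cb (Suc k) j * theta n m j x i)"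
      by (simp add: cb_pascal distrib_right sum.distrib)
    finally show "(chi n m ^^ Suc k) x i = (\<Sum>j\<le>?L. cb (Suc k) j * theta n m j x i)" .
  qed
qed

theorem theorem4:
  fixes n m k :: nat and a :: "nat \<Rightarrow> bit"
  assumes "n \<ge> 1" and "m \<ge> 2" and "\<not> m dvd n" and "k \<ge> 1"
    and "\<And>j. a j = 1 \<longleftrightarrow> bin_le j k"
  shows "\<forall>x :: nat \<Rightarrow> bit. \<forall>i<n.
           (chi n m ^^ k) x i = (\<Sum>j\<in>{0..min k (n div m)}. a j * theta n m j x i)"
proof (intro allI impI)
  fix x :: "nat \<Rightarrow> bit" and i assume i: "i < n"
  have aj: "a j = cb k j" for j
    using assms(5)[of j] by (cases "a j") (auto simp: cb_def)
  have "(chi n m ^^ k) x i = (\<Sum>j\<le>n div m. cb k j * theta n m j x i)"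
    using chi_pow[OF assms(1-3)] i by blast
  also have "\<dots> = (\<Sum>j\<in>{0..min k (n div m)}. cb k j * theta n m j x i)"
  proof (rule sum.mono_neutral_right)
    show "finite {..n div m}" by simp
    show "{0..min k (n div m)} \<subseteq> {..n div m}" by auto
    show "\<forall>j\<in>{..n div m} - {0..min k (n div m)}. cb k j * theta n m j x i = 0"
      using bin_le_le[of _ k] by (auto simp: cb_def)
  qed
  finally show "(chi n m ^^ k) x i = (\<Sum>j\<in>{0..min k (n div m)}. a j * theta n m j x i)"
    by (simp add: aj)
qed

end
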